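(* Let $f\in L^1(\partial\Omega)$ and let $u\in L^1(\Omega)$ be such that $Tu=f$ $\mathcal{H}$-a.e. on $\partial\Omega$. Then for $\mathcal{L}^1$-a.e. $t\in\mathbb{R}$, $T\chi_{\{u>t\}}=\chi_{\{f>t\}}$ $\mathcal{H}$-a.e. on $\partial\Omega$.
   Context: Standing setting: $(X,d,\mu)$ is a complete metric measure space, $\mu$ is a Borel regular measure which is doubling (there is $C_D\ge1$ with $0<\mu(B(x,2r))\le C_D\mu(B(x,r))<\infty$ for all $x\in X$, $r>0$), and $X$ supports a $(1,1)$-Poincaré inequality. The codimension one Hausdorff measure is $\mathcal{H}(E)=\lim_{\delta\to0^+}\inf\{\sum_i\mu(B_i)/\mathrm{rad}(B_i): E\subset\bigcup_iB_i,\ \mathrm{rad}(B_i)<\delta\}$. $\Omega\subset X$ is a bounded domain with $\mu(X\setminus\Omega)>0$ and $\mathcal{H}(\partial\Omega)<\infty$ (with $\mathcal{H}|_{\partial\Omega}$ doubling and lower codimension 1 Ahlfors regular). $\mathcal{L}^1$ is Lebesgue measure on $\mathbb{R}$. Trace: a function $u\in L^1(\Omega)$ has trace $Tu(x)\in\mathbb{R}$ at $x\in\partial\Omega$ if $\lim_{r\to0^+}\frac{1}{\mu(B(x,r)\cap\Omega)}\int_{B(x,r)\cap\Omega}|u-Tu(x)|\,d\mu=0$. *)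

theory Defs
  imports "HOL-Analysis.Analysis"
begin

definition curve_length :: "(real \<Rightarrow> 'a::metric_space) \<Rightarrow> real \<Rightarrow> real \<Rightarrow> ennreal" where
  "curve_length \<gamma> a b =
     (SUP ts \<in> {ts. sorted ts \<and> set ts \<subseteq> {a..b}}.
        ennreal (\<Sum>i<length ts - 1. dist (\<gamma> (ts ! i)) (\<gamma> (ts ! Suc i))))"

definition arc_length_param :: "(real \<Rightarrow> 'a::metric_space) \<Rightarrow> real \<Rightarrow> bool" where
  "arc_length_param \<gamma> L \<longleftrightarrow>
     (\<forall>s t. 0 \<le> s \<and> s \<le> t \<and> t \<le> L \<longrightarrow> curve_length \<gamma> s t = ennreal (t - s))"

text \<open>g is an upper gradient of u: for every nonconstant compact rectifiable curve,
  in its arc-length parametrization gamma : [0,L] -> X (L > 0),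
  |u(gamma 0) - u(gamma L)| is at most the line integral of g along gamma.\<close>
definition upper_gradient :: "('a::metric_space \<Rightarrow> real) \<Rightarrow> ('a \<Rightarrow> ennreal) \<Rightarrow> bool" where
  "upper_gradient u g \<longleftrightarrow> g \<in> borel_measurable borel \<and>
     (\<forall>\<gamma> L. 0 < L \<and> arc_length_param \<gamma> L \<longrightarrow>
        ennreal \<bar>u (\<gamma> 0) - u (\<gamma> L)\<bar> \<le> (\<integral>\<^sup>+ t\<in>{0..L}. g (\<gamma> t) \<partial>lborel))"

definition doubling_measure :: "'a::metric_space measure \<Rightarrow> bool" where
  "doubling_measure \<mu> \<longleftrightarrow> (\<exists>C\<ge>1. \<forall>x r. 0 < r \<longrightarrow>
      0 < emeasure \<mu> (ball x (2*r)) \<and>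
      emeasure \<mu> (ball x (2*r)) \<le> ennreal C * emeasure \<mu> (ball x r) \<and>
      emeasure \<mu> (ball x r) < \<infinity>)"

definition poincare_11 :: "'a::metric_space measure \<Rightarrow> bool" where
  "poincare_11 \<mu> \<longleftrightarrow> (\<exists>C>0. \<exists>lam\<ge>1. \<forall>u g x r.
      u \<in> borel_measurable borel \<and> (\<forall>y s. set_integrable \<mu> (ball y s) u) \<and>
      upper_gradient u g \<and> 0 < r \<longrightarrow>
      (\<integral>\<^sup>+ y\<in>ball x r. ennreal \<bar>u y - (\<integral>z\<in>ball x r. u z \<partial>\<mu>) / measure \<mu> (ball x r)\<bar> \<partial>\<mu>)
          / emeasure \<mu> (ball x r)
      \<le> ennreal (C * r) * ((\<integral>\<^sup>+ y\<in>ball x (lam*r). g y \<partial>\<mu>) / emeasure \<mu> (ball x (lam*r))))"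

text \<open>Covers by countably many balls B(c i, r i) with radii less than delta.
  Radius 0 (empty ball) is allowed and contributes 0, so that finite covers are included.\<close>
definition codim1_H_delta :: "'a::metric_space measure \<Rightarrow> real \<Rightarrow> 'a set \<Rightarrow> ennreal" where
  "codim1_H_delta \<mu> \<delta> E =
     (INF cr \<in> {(c, r). (\<forall>i::nat. 0 \<le> r i \<and> r i < \<delta>) \<and> E \<subseteq> (\<Union>i. ball (c i) (r i))}.
        (\<Sum>i. if snd cr i = 0 then 0
              else emeasure \<mu> (ball (fst cr i) (snd cr i)) / ennreal (snd cr i)))"

definition codim1_H :: "'a::metric_space measure \<Rightarrow> 'a set \<Rightarrow> ennreal" where
  "codim1_H \<mu> E = (SUP \<delta>\<in>{0<..}. codim1_H_delta \<mu> \<delta> E)"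

definition codim1_H_on :: "'a::metric_space measure \<Rightarrow> 'a set \<Rightarrow> 'a measure" where
  "codim1_H_on \<mu> S = measure_of S (sets (restrict_space borel S)) (codim1_H \<mu>)"

definition H_ae_on :: "'a::metric_space measure \<Rightarrow> 'a set \<Rightarrow> ('a \<Rightarrow> bool) \<Rightarrow> bool" where
  "H_ae_on \<mu> S P \<longleftrightarrow> (\<exists>N. codim1_H \<mu> N = 0 \<and> (\<forall>x\<in>S - N. P x))"

definition has_trace :: "'a::metric_space measure \<Rightarrow> 'a set \<Rightarrow> ('a \<Rightarrow> real) \<Rightarrow> 'a \<Rightarrow> real \<Rightarrow> bool" where
  "has_trace \<mu> \<Omega> u x v \<longleftrightarrow>
     ((\<lambda>r. (\<integral>\<^sup>+ y\<in>ball x r \<inter> \<Omega>. ennreal \<bar>u y - v\<bar> \<partial>\<mu>) / emeasure \<mu> (ball x r \<inter> \<Omega>))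
        \<longlongrightarrow> 0) (at_right 0)"

definition boundary_doubling :: "'a::metric_space measure \<Rightarrow> 'a set \<Rightarrow> bool" where
  "boundary_doubling \<mu> \<Omega> \<longleftrightarrow> (\<exists>C\<ge>1. \<forall>x\<in>frontier \<Omega>. \<forall>r>0.
      codim1_H \<mu> (ball x (2*r) \<inter> frontier \<Omega>) \<le> ennreal C * codim1_H \<mu> (ball x r \<inter> frontier \<Omega>))"

definition lower_codim1_ahlfors :: "'a::metric_space measure \<Rightarrow> 'a set \<Rightarrow> bool" where
  "lower_codim1_ahlfors \<mu> \<Omega> \<longleftrightarrow> (\<exists>C\<ge>1. \<forall>x\<in>frontier \<Omega>. \<forall>r. 0 < r \<and> r < 2 * diameter \<Omega> \<longrightarrow>
      emeasure \<mu> (ball x r) / ennreal (C * r) \<le> codim1_H \<mu> (ball x r \<inter> frontier \<Omega>))"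

end

theory Submission
  imports Defs
begin

definition tm :: "'a::metric_space measure \<Rightarrow> 'a \<Rightarrow> real \<Rightarrow> ennreal" where
  "tm \<mu> c r = (if r = 0 then 0 else emeasure \<mu> (ball c r) / ennreal r)"

definition cov :: "real \<Rightarrow> 'a::metric_space set \<Rightarrow> ((nat \<Rightarrow> 'a) \<times> (nat \<Rightarrow> real)) set" where
  "cov \<delta> E = {(c, r). (\<forall>i::nat. 0 \<le> r i \<and> r i < \<delta>) \<and> E \<subseteq> (\<Union>i. ball (c i) (r i))}"

lemma Hd_eq: "codim1_H_delta \<mu> \<delta> E = (INF cr \<in> cov \<delta> E. (\<Sum>i. tm \<mu> (fst cr i) (snd cr i)))"
  unfolding codim1_H_delta_def cov_def tm_def by simp

lemma Hd_le: "(c, r) \<in> cov \<delta> E \<Longrightarrow> codim1_H_delta \<mu> \<delta> E \<le> (\<Sum>i. tm \<mu> (c i) (r i))"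
  unfolding Hd_eq by (rule INF_lower2, assumption) simp

lemma Hd_mono_set: "A \<subseteq> B \<Longrightarrow> codim1_H_delta \<mu> \<delta> A \<le> codim1_H_delta \<mu> \<delta> B"
  unfolding Hd_eq by (rule INF_superset_mono) (auto simp: cov_def)

lemma Hd_anti: "\<delta>1 \<le> \<delta>2 \<Longrightarrow> codim1_H_delta \<mu> \<delta>2 E \<le> codim1_H_delta \<mu> \<delta>1 E"
  unfolding Hd_eq cov_def by (rule INF_superset_mono) (auto intro: order_less_le_trans)

lemma Hd_le_H: "0 < \<delta> \<Longrightarrow> codim1_H_delta \<mu> \<delta> E \<le> codim1_H \<mu> E"
  unfolding codim1_H_def by (rule SUP_upper) auto

lemma H_mono: "A \<subseteq> B \<Longrightarrow> codim1_H \<mu> A \<le> codim1_H \<mu> B"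
  unfolding codim1_H_def by (intro SUP_mono) (auto intro: Hd_mono_set)

lemma H_empty: "codim1_H \<mu> {} = 0"
proof -
  have "codim1_H_delta \<mu> \<delta> {} = 0" if "\<delta> > 0" for \<delta>
  proof -
    have "(\<lambda>_. undefined, \<lambda>_. 0) \<in> cov \<delta> {}" using that by (auto simp: cov_def)
    from Hd_le[OF this, of \<mu>] show ?thesis by (simp add: tm_def)
  qed
  then show ?thesis unfolding codim1_H_def by simp
qed

lemma Hd_csub:
  fixes A :: "nat \<Rightarrow> 'a::metric_space set"
  shows "codim1_H_delta \<mu> \<delta> (\<Union>n. A n) \<le> (\<Sum>n. codim1_H_delta \<mu> \<delta> (A n))"
proof (rule ennreal_le_epsilon)
  fix e :: real
  assume fin: "(\<Sum>n. codim1_H_delta \<mu> \<delta> (A n)) < top" and e: "0 < e"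
  let ?H = "\<lambda>n. codim1_H_delta \<mu> \<delta> (A n)"
  have Hfin: "?H n < top" for n
    by (metis ennreal_suminf_lessD fin less_top top_neq_ennreal ennreal_less_top)
  have "\<exists>cr. cr \<in> cov \<delta> (A n) \<and> (\<Sum>i. tm \<mu> (fst cr i) (snd cr i)) < ?H n + ennreal (e / 2 ^ Suc n)" for n
  proof -
    have "?H n < ?H n + ennreal (e / 2 ^ Suc n)"
      using Hfin[of n] e by (simp add: ennreal_add_diff_cancel_left less_top ennreal_less_iff)
    then show ?thesis unfolding Hd_eq[of \<mu> \<delta> "A n"] INF_less_iff by blast
  qed
  then obtain C where C: "\<And>n. C n \<in> cov \<delta> (A n)"
    and Cle: "\<And>n. (\<Sum>i. tm \<mu> (fst (C n) i) (snd (C n) i)) < ?H n + ennreal (e / 2 ^ Suc n)"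
    by metis
  define c where "c i = fst (C (fst (prod_decode i))) (snd (prod_decode i))" for i
  define r where "r i = snd (C (fst (prod_decode i))) (snd (prod_decode i))" for i
  have "(c, r) \<in> cov \<delta> (\<Union>n. A n)"
  proof -
    have "0 \<le> r i \<and> r i < \<delta>" for i using C[of "fst (prod_decode i)"]
      by (auto simp: cov_def r_def case_prod_beta)
    moreover have "x \<in> (\<Union>i. ball (c i) (r i))" if "x \<in> A n" for x n
    proof -
      from C[of n] that obtain k where "x \<in> ball (fst (C n) k) (snd (C n) k)"
        by (auto simp: cov_def case_prod_beta)
      then show ?thesis
        by (intro UN_I[of "prod_encode (n, k)"]) (auto simp: c_def r_def)
    qed
    ultimately show ?thesis by (auto simp: cov_def)
  qed
  then have "codim1_H_delta \<mu> \<delta> (\<Union>n. A n) \<le> (\<Sum>i. tm \<mu> (c i) (r i))" by (rule Hd_le)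
  also have "\<dots> = (\<Sum>n. (\<Sum>i. tm \<mu> (fst (C n) i) (snd (C n) i)))"
    unfolding c_def r_def
    by (rule suminf_ennreal_2dimen[where f = "\<lambda>p. tm \<mu> (fst (C (fst p)) (snd p)) (snd (C (fst p)) (snd p))"]) simp
  also have "\<dots> \<le> (\<Sum>n. ?H n + ennreal (e / 2 ^ Suc n))"
    by (intro suminf_le less_imp_le[OF Cle] summableI)
  also have "\<dots> = (\<Sum>n. ?H n) + (\<Sum>n. ennreal (e / 2 ^ Suc n))"
    by (rule suminf_add[symmetric]) auto
  also have "(\<Sum>n. ennreal (e / 2 ^ Suc n)) = ennreal e"
  proof -
    have s: "(\<lambda>n. e * (1/2::real) ^ Suc n) sums (e * 1)"
      by (intro sums_mult power_half_series)
    have "(\<Sum>n. ennreal (e / 2 ^ Suc n)) = ennreal (\<Sum>n. e / 2 ^ Suc n)"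
      using s e by (intro suminf_ennreal2) (auto simp: sums_iff power_divide)
    also have "(\<Sum>n. e / 2 ^ Suc n) = e" using s by (simp add: sums_iff power_divide)
    finally show ?thesis .
  qed
  finally show "codim1_H_delta \<mu> \<delta> (\<Union>n. A n) \<le> (\<Sum>n. ?H n) + ennreal e" .
qed

lemma H_csub:
  fixes A :: "nat \<Rightarrow> 'a::metric_space set"
  shows "codim1_H \<mu> (\<Union>n. A n) \<le> (\<Sum>n. codim1_H \<mu> (A n))"
  unfolding codim1_H_def[of \<mu> "\<Union>n. A n"]
proof (rule SUP_least)
  fix \<delta> :: real assume "\<delta> \<in> {0<..}"
  then have "codim1_H_delta \<mu> \<delta> (A n) \<le> codim1_H \<mu> (A n)" for n by (intro Hd_le_H) auto
  then have "(\<Sum>n. codim1_H_delta \<mu> \<delta> (A n)) \<le> (\<Sum>n. codim1_H \<mu> (A n))"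
    by (intro suminf_le summableI)
  with Hd_csub[of \<mu> \<delta> A]
  show "codim1_H_delta \<mu> \<delta> (\<Union>n. A n) \<le> (\<Sum>n. codim1_H \<mu> (A n))"
    by (rule order_trans)
qed

lemma H_sub2: "codim1_H \<mu> (A \<union> B) \<le> codim1_H \<mu> A + codim1_H \<mu> B"
proof -
  have "codim1_H \<mu> (\<Union>n. (\<lambda>n::nat. if n = 0 then A else if n = 1 then B else {}) n)
     \<le> (\<Sum>n. codim1_H \<mu> ((\<lambda>n::nat. if n = 0 then A else if n = 1 then B else {}) n))"
    by (rule H_csub[of \<mu> "(\<lambda>n::nat. if n = 0 then A else if n = 1 then B else {})"])
  also have "(\<Sum>n. codim1_H \<mu> ((\<lambda>n::nat. if n = 0 then A else if n = 1 then B else {}) n))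
     = (\<Sum>n<2. codim1_H \<mu> ((\<lambda>n::nat. if n = 0 then A else if n = 1 then B else {}) n))"
    by (rule suminf_finite) (auto simp: H_empty)
  also have "(\<Union>n. (\<lambda>n::nat. if n = 0 then A else if n = 1 then B else {}) n) = A \<union> B"
    by (auto split: if_splits)
  finally show ?thesis by (simp add: eval_nat_numeral)
qed

lemma Hd_sep:
  assumes "0 < \<delta>" "2 * \<delta> \<le> \<eta>" and sep: "\<And>a b. a \<in> A \<Longrightarrow> b \<in> B \<Longrightarrow> \<eta> \<le> dist a b"
  shows "codim1_H_delta \<mu> \<delta> A + codim1_H_delta \<mu> \<delta> B \<le> codim1_H_delta \<mu> \<delta> (A \<union> B)"
  unfolding Hd_eq[of \<mu> \<delta> "A \<union> B"]
proof (rule INF_greatest)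
  fix cr assume "cr \<in> cov \<delta> (A \<union> B)"
  then obtain c r where cr: "cr = (c, r)" and r: "\<And>i. 0 \<le> r i \<and> r i < \<delta>"
    and sub: "A \<union> B \<subseteq> (\<Union>i. ball (c i) (r i))" by (auto simp: cov_def)
  define rA where "rA i = (if ball (c i) (r i) \<inter> A \<noteq> {} then r i else 0)" for i
  define rB where "rB i = (if ball (c i) (r i) \<inter> B \<noteq> {} then r i else 0)" for i
  have cA: "(c, rA) \<in> cov \<delta> A"
    using r sub assms(1) by (fastforce simp: cov_def rA_def)
  have cB: "(c, rB) \<in> cov \<delta> B"
    using r sub assms(1) by (fastforce simp: cov_def rB_def)
  have tmle: "tm \<mu> (c i) (rA i) + tm \<mu> (c i) (rB i) \<le> tm \<mu> (c i) (r i)" for i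
  proof -
    have "\<not> (ball (c i) (r i) \<inter> A \<noteq> {} \<and> ball (c i) (r i) \<inter> B \<noteq> {})"
    proof
      assume "ball (c i) (r i) \<inter> A \<noteq> {} \<and> ball (c i) (r i) \<inter> B \<noteq> {}"
      then obtain a b where "a \<in> A" "b \<in> B" "dist (c i) a < r i" "dist (c i) b < r i" by auto
      then have "dist a b < 2 * \<delta>" using r[of i] dist_triangle3[of a b "c i"] by linarith
      with sep[OF \<open>a \<in> A\<close> \<open>b \<in> B\<close>] assms(2) show False by linarith
    qed
    then show ?thesis by (auto simp: rA_def rB_def tm_def)
  qed
  have "codim1_H_delta \<mu> \<delta> A + codim1_H_delta \<mu> \<delta> B \<le> (\<Sum>i. tm \<mu> (c i) (rA i)) + (\<Sum>i. tm \<mu> (c i) (rB i))"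
    by (intro add_mono Hd_le cA cB)
  also have "\<dots> = (\<Sum>i. tm \<mu> (c i) (rA i) + tm \<mu> (c i) (rB i))"
    by (rule suminf_add) auto
  also have "\<dots> \<le> (\<Sum>i. tm \<mu> (c i) (r i))"
    by (intro suminf_le tmle summableI)
  finally show "codim1_H_delta \<mu> \<delta> A + codim1_H_delta \<mu> \<delta> B \<le> (\<Sum>i. tm \<mu> (fst cr i) (snd cr i))"
    by (simp add: cr)
qed

lemma H_sep:
  assumes "0 < \<eta>" and sep: "\<And>a b. a \<in> A \<Longrightarrow> b \<in> B \<Longrightarrow> \<eta> \<le> dist a b"
  shows "codim1_H \<mu> A + codim1_H \<mu> B \<le> codim1_H \<mu> (A \<union> B)"
proof -
  have "codim1_H_delta \<mu> d1 A + codim1_H_delta \<mu> d2 B \<le> codim1_H \<mu> (A \<union> B)"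
    if "0 < d1" "0 < d2" for d1 d2
  proof -
    define d where "d = min (min d1 d2) (\<eta> / 2)"
    have d: "0 < d" "2 * d \<le> \<eta>" "d \<le> d1" "d \<le> d2" using that assms(1) by (auto simp: d_def)
    have "codim1_H_delta \<mu> d1 A + codim1_H_delta \<mu> d2 B \<le> codim1_H_delta \<mu> d A + codim1_H_delta \<mu> d B"
      by (intro add_mono Hd_anti d)
    also have "\<dots> \<le> codim1_H_delta \<mu> d (A \<union> B)" by (rule Hd_sep[OF d(1,2) sep])
    also have "\<dots> \<le> codim1_H \<mu> (A \<union> B)" by (rule Hd_le_H[OF d(1)])
    finally show ?thesis .
  qed
  note H = this
  have "(SUP d1\<in>{0<..}. codim1_H_delta \<mu> d1 A) + (SUP d2\<in>{0<..}. codim1_H_delta \<mu> d2 B)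
      = (SUP d2\<in>{0<..}. (SUP d1\<in>{0<..}. codim1_H_delta \<mu> d1 A) + codim1_H_delta \<mu> d2 B)"
    by (rule ennreal_SUP_add_right) auto
  also have "\<dots> \<le> codim1_H \<mu> (A \<union> B)"
  proof (rule SUP_least)
    fix d2 :: real assume d2: "d2 \<in> {0<..}"
    have "(SUP d1\<in>{0<..}. codim1_H_delta \<mu> d1 A) + codim1_H_delta \<mu> d2 B
        = (SUP d1\<in>{0<..}. codim1_H_delta \<mu> d1 A + codim1_H_delta \<mu> d2 B)"
      by (rule ennreal_SUP_add_left[symmetric]) auto
    also have "\<dots> \<le> codim1_H \<mu> (A \<union> B)"
      using H d2 by (intro SUP_least) auto
    finally show "(SUP d1\<in>{0<..}. codim1_H_delta \<mu> d1 A) + codim1_H_delta \<mu> d2 B \<le> codim1_H \<mu> (A \<union> B)" .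
  qed
  finally show ?thesis unfolding codim1_H_def[of \<mu> A] codim1_H_def[of \<mu> B] .
qed


lemma H_sep_d:
  fixes d :: "'a::metric_space \<Rightarrow> real"
  assumes lip: "\<And>x y. \<bar>d x - d y\<bar> \<le> dist x y" and "\<beta> < \<alpha>"
    and A: "\<And>x. x \<in> A \<Longrightarrow> \<alpha> < d x" and B: "\<And>y. y \<in> B \<Longrightarrow> d y \<le> \<beta>"
  shows "codim1_H \<mu> A + codim1_H \<mu> B \<le> codim1_H \<mu> (A \<union> B)"
proof (rule H_sep[of "\<alpha> - \<beta>"])
  show "0 < \<alpha> - \<beta>" using assms by simp
  fix a b assume "a \<in> A" "b \<in> B"
  then show "\<alpha> - \<beta> \<le> dist a b" using A[of a] B[of b] lip[of a b] by linarith
qed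

lemma H_closed_split:
  fixes F X :: "'a::metric_space set"
  assumes "closed F"
  shows "codim1_H \<mu> (X \<inter> F) + codim1_H \<mu> (X - F) \<le> codim1_H \<mu> X"
proof (cases "F = {} \<or> codim1_H \<mu> X = \<infinity>")
  case True
  then show ?thesis by (auto simp: H_empty)
next
  case False
  then have Fne: "F \<noteq> {}" and Xfin: "codim1_H \<mu> X < \<infinity>" by (auto simp: less_top)
  define d where "d x = infdist x F" for x
  have lip: "\<bar>d x - d y\<bar> \<le> dist x y" for x y unfolding d_def by (rule infdist_triangle_abs)
  define a where "a k = 1 / (real k + 1)" for k :: nat
  have a_pos: "0 < a k" for k by (simp add: a_def)
  have a_mono: "i \<le> k \<Longrightarrow> a k \<le> a i" for i k by (simp add: a_def frac_le)
  have a_strict: "i < k \<Longrightarrow> a k < a i" for i k by (simp add: a_def frac_less2)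
  define Xn where "Xn n = {x\<in>X. a n < d x}" for n
  define R where "R k = {x\<in>X. a (Suc k) < d x \<and> d x \<le> a k}" for k
  let ?H = "codim1_H \<mu>"
  have step1: "?H (X \<inter> F) + ?H (Xn n) \<le> ?H X" for n
  proof -
    have "?H (X \<inter> F) + ?H (Xn n) \<le> ?H (X \<inter> F \<union> Xn n)"
    proof (rule H_sep[of "a n"])
      show "0 < a n" by (rule a_pos)
      fix x y assume "x \<in> X \<inter> F" "y \<in> Xn n"
      then have "infdist y F \<le> dist y x" "a n < d y" by (auto intro: infdist_le simp: Xn_def)
      then show "a n \<le> dist x y" by (simp add: d_def dist_commute)
    qed
    also have "\<dots> \<le> ?H X" by (rule H_mono) (auto simp: Xn_def)
    finally show ?thesis .
  qed
  have ringsum: "(\<Sum>k<m. ?H (R (2*k+j))) \<le> ?H (\<Union>k<m. R (2*k+j))" for m j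
  proof (induction m)
    case 0 then show ?case by simp
  next
    case (Suc m)
    have "(\<Sum>k<Suc m. ?H (R (2*k+j))) = (\<Sum>k<m. ?H (R (2*k+j))) + ?H (R (2*m+j))" by simp
    also have "\<dots> \<le> ?H (\<Union>k<m. R (2*k+j)) + ?H (R (2*m+j))" using Suc by (rule add_right_mono)
    also have "\<dots> \<le> ?H ((\<Union>k<m. R (2*k+j)) \<union> R (2*m+j))"
    proof (cases m)
      case 0 then show ?thesis by (simp add: H_empty)
    next
      case (Suc m')
      show ?thesis
      proof (rule H_sep_d[OF lip, of "a (2*m+j)" "a (2*m+j - 1)"])
        show "a (2*m+j) < a (2*m+j - 1)" using Suc by (intro a_strict) simp
        fix x assume "x \<in> (\<Union>k<m. R (2*k+j))"
        then obtain k where "k < m" "a (Suc (2*k+j)) < d x" by (auto simp: R_def)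
        moreover have "a (2*m+j - 1) \<le> a (Suc (2*k+j))" using \<open>k < m\<close> by (intro a_mono) simp
        ultimately show "a (2*m+j - 1) < d x" by simp
      next
        fix y assume "y \<in> R (2*m+j)" then show "d y \<le> a (2*m+j)" by (simp add: R_def)
      qed
    qed
    also have "\<dots> = ?H (\<Union>k<Suc m. R (2*k+j))" by (simp add: lessThan_Suc Un_commute)
    finally show ?case .
  qed
  have ring_le: "(\<Sum>k<m. ?H (R (2*k+j))) \<le> ?H X" for m j
  proof -
    have "(\<Union>k<m. R (2*k+j)) \<subseteq> X" by (auto simp: R_def)
    from order_trans[OF ringsum H_mono[OF this]] show ?thesis .
  qed
  have split2: "(\<Sum>k<2*m. f k) = (\<Sum>k<m. f (2*k)) + (\<Sum>k<m. f (2*k+1))" for m and f :: "nat \<Rightarrow> ennreal"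
    by (induction m) (auto simp: add_ac)
  have sumR: "(\<Sum>k. ?H (R k)) \<le> 2 * ?H X"
  proof (rule suminf_le_const[OF summableI])
    fix n
    have "(\<Sum>k<n. ?H (R k)) \<le> (\<Sum>k<2*n. ?H (R k))" by (intro sum_mono2) auto
    also have "\<dots> = (\<Sum>k<n. ?H (R (2*k+0))) + (\<Sum>k<n. ?H (R (2*k+1)))" by (simp add: split2)
    also have "\<dots> \<le> ?H X + ?H X" by (intro add_mono ring_le)
    finally show "(\<Sum>k<n. ?H (R k)) \<le> 2 * ?H X" by (simp add: mult_2)
  qed
  define g where "g k = enn2real (?H (R k))" for k
  have Rfin: "?H (R k) < \<infinity>" for k
    using H_mono[of "R k" X \<mu>] Xfin by (auto simp: R_def)
  have Rg: "?H (R k) = ennreal (g k)" for k using Rfin[of k] by (simp add: g_def less_top)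
  have g_nn: "0 \<le> g k" for k by (simp add: g_def)
  have "(\<Sum>k. ennreal (g k)) \<noteq> top"
  proof -
    have "2 * ?H X < top" using Xfin by (simp add: ennreal_mult_less_top)
    then show ?thesis using sumR by (auto simp: Rg[symmetric] top_unique)
  qed
  then have g_sum: "summable g" by (intro summable_suminf_not_top g_nn)
  have cover: "X - F \<subseteq> Xn n \<union> (\<Union>i. R (i + n))" for n
  proof
    fix x assume x: "x \<in> X - F"
    then have dpos: "0 < d x" using infdist_pos_not_in_closed[OF assms Fne] by (simp add: d_def)
    show "x \<in> Xn n \<union> (\<Union>i. R (i + n))"
    proof (cases "a n < d x")
      case True then show ?thesis using x by (simp add: Xn_def)
    next
      case False
      define m where "m = nat \<lfloor>1 / d x\<rfloor>"
      have "real n + 1 \<le> 1 / d x" using False dpos by (simp add: a_def field_simps)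
      then have mn: "n + 1 \<le> m" unfolding m_def by linarith
      have m1: "real m \<le> 1 / d x" "1 / d x < real m + 1" unfolding m_def
        using dpos by (auto simp: of_nat_nat)
      have "d x \<le> 1 / real m" using m1 dpos mn by (simp add: field_simps)
      moreover have "1 / (real m + 1) < d x" using m1 dpos by (simp add: field_simps)
      ultimately have "x \<in> R ((m - 1 - n) + n)" using x mn
        by (auto simp: R_def a_def of_nat_diff)
      then show ?thesis by blast
    qed
  qed
  show ?thesis
  proof (rule ennreal_le_epsilon)
    fix e :: real assume e: "0 < e"
    obtain N where N: "\<And>n. n \<ge> N \<Longrightarrow> norm (\<Sum>i. g (i + n)) < e"
      using suminf_exist_split[OF e g_sum] by blast
    have gs: "summable (\<lambda>i. g (i + N))" using g_sum by (rule summable_ignore_initial_segment)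
    have "?H (X - F) \<le> ?H (Xn N \<union> (\<Union>i. R (i + N)))" by (rule H_mono[OF cover])
    also have "\<dots> \<le> ?H (Xn N) + ?H (\<Union>i. R (i + N))" by (rule H_sub2)
    also have "\<dots> \<le> ?H (Xn N) + (\<Sum>i. ?H (R (i + N)))" by (intro add_left_mono H_csub)
    also have "(\<Sum>i. ?H (R (i + N))) = ennreal (\<Sum>i. g (i + N))"
      unfolding Rg by (intro suminf_ennreal2 g_nn gs)
    also have "ennreal (\<Sum>i. g (i + N)) \<le> ennreal e"
      using N[of N] by (intro ennreal_leI) (auto simp: suminf_nonneg[OF gs g_nn])
    finally have "?H (X \<inter> F) + ?H (X - F) \<le> ?H (X \<inter> F) + (?H (Xn N) + ennreal e)"
      by (auto intro: add_left_mono)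
    also have "\<dots> = (?H (X \<inter> F) + ?H (Xn N)) + ennreal e" by (simp add: add_ac)
    also have "\<dots> \<le> ?H X + ennreal e" by (intro add_right_mono step1)
    finally show "?H (X \<inter> F) + ?H (X - F) \<le> ?H X + ennreal e" .
  qed
qed


lemma H_outer: "outer_measure_space UNIV (codim1_H \<mu>)"
  unfolding outer_measure_space_def positive_def increasing_def countably_subadditive_def
  by (auto simp: H_empty intro: H_mono H_csub)

lemma H_caratheodory:
  fixes \<mu> :: "'a::metric_space measure"
  defines "L \<equiv> lambda_system UNIV UNIV (codim1_H \<mu>)"
  shows "measure_space UNIV L (codim1_H \<mu>)" and "sets borel \<subseteq> L"
proof -
  interpret sa: sigma_algebra "UNIV::'a set" UNIV
    using sigma_algebra_Pow[of "UNIV::'a set"] by simp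
  show ms: "measure_space UNIV L (codim1_H \<mu>)"
    unfolding L_def by (rule sa.caratheodory_lemma[OF H_outer])
  then have sL: "sigma_algebra UNIV L" by (simp add: measure_space_def)
  have "F \<in> L" if "closed F" for F :: "'a set"
  proof -
    have "codim1_H \<mu> (x \<inter> F) + codim1_H \<mu> (x - F) = codim1_H \<mu> x" for x
    proof (rule antisym)
      show "codim1_H \<mu> (x \<inter> F) + codim1_H \<mu> (x - F) \<le> codim1_H \<mu> x"
        by (rule H_closed_split[OF that])
      have "x = (x \<inter> F) \<union> (x - F)" by blast
      then have "codim1_H \<mu> x = codim1_H \<mu> ((x \<inter> F) \<union> (x - F))" by metis
      also have "\<dots> \<le> codim1_H \<mu> (x \<inter> F) + codim1_H \<mu> (x - F)" by (rule H_sub2)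
      finally show "codim1_H \<mu> x \<le> codim1_H \<mu> (x \<inter> F) + codim1_H \<mu> (x - F)" .
    qed
    then show ?thesis unfolding L_def sa.lambda_system_eq by simp
  qed
  then have "sigma_sets UNIV (Collect closed) \<subseteq> L"
    by (intro sigma_algebra.sigma_sets_subset[OF sL]) auto
  then show "sets borel \<subseteq> L" by (simp add: borel_eq_closed)
qed

lemma countable_levels:
  fixes \<mu> :: "'a::metric_space measure" and f :: "'a \<Rightarrow> real"
  assumes S: "closed S" and Sfin: "codim1_H \<mu> S < \<infinity>"
    and f: "f \<in> borel_measurable (restrict_space borel S)"
  shows "countable {t. codim1_H \<mu> {x\<in>S. f x = t} \<noteq> 0}"
proof -
  define L where "L = lambda_system UNIV UNIV (codim1_H \<mu>)"
  have ms: "measure_space UNIV L (codim1_H \<mu>)" and bL: "sets borel \<subseteq> L"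
    using H_caratheodory[of \<mu>] by (auto simp: L_def)
  have sL: "sigma_algebra UNIV L" and pos: "positive L (codim1_H \<mu>)"
    and ca: "countably_additive L (codim1_H \<mu>)" using ms by (auto simp: measure_space_def)
  define M0 where "M0 = measure_of UNIV L (codim1_H \<mu>)"
  have sM0: "sets M0 = L" unfolding M0_def
    using sL by (simp add: sigma_algebra.sets_measure_of_eq sigma_algebra.sigma_sets_eq)
  have spM0: "space M0 = UNIV" unfolding M0_def using sL
    by (simp add: space_measure_of_conv)
  have eM0: "A \<in> L \<Longrightarrow> emeasure M0 A = codim1_H \<mu> A" for A
    unfolding M0_def by (rule emeasure_measure_of_sigma[OF sL pos ca])
  have SL: "S \<in> L" using S bL by auto
  define M1 where "M1 = restrict_space M0 S"
  have spM1: "space M1 = S" by (simp add: M1_def space_restrict_space spM0)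
  have eM1: "A \<in> L \<Longrightarrow> A \<subseteq> S \<Longrightarrow> emeasure M1 A = codim1_H \<mu> A" for A
    unfolding M1_def by (subst emeasure_restrict_space) (auto simp: spM0 sM0 SL eM0)
  have fm: "f \<in> borel_measurable M1"
  proof (rule measurableI)
    fix x assume "x \<in> space M1" then show "f x \<in> space borel" by simp
  next
    fix B :: "real set" assume "B \<in> sets borel"
    then have "f -` B \<inter> space (restrict_space borel S) \<in> sets (restrict_space borel S)"
      using f by (rule measurable_sets[rotated])
    then have "f -` B \<inter> S \<in> sets borel" "f -` B \<inter> S \<subseteq> S"
      using S by (auto simp: sets_restrict_space_iff space_restrict_space)
    then show "f -` B \<inter> space M1 \<in> sets M1"
      using bL SL unfolding M1_def
      by (subst sets_restrict_space_iff) (auto simp: spM0 sM0 space_restrict_space)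
  qed
  define D where "D = distr M1 borel f"
  have finM1: "finite_measure M1"
  proof (rule finite_measureI)
    show "emeasure M1 (space M1) \<noteq> \<infinity>" using Sfin by (simp add: spM1 eM1 SL)
  qed
  have "finite_measure D" unfolding D_def
    by (rule finite_measure.finite_measure_distr[OF finM1 fm])
  then have cnt: "countable {t. measure D {t} \<noteq> 0}" by (rule finite_measure.countable_support)
  have "codim1_H \<mu> {x\<in>S. f x = t} = emeasure D {t}" for t
  proof -
    have "emeasure D {t} = emeasure M1 (f -` {t} \<inter> space M1)"
      unfolding D_def by (rule emeasure_distr[OF fm]) simp
    also have "f -` {t} \<inter> space M1 = {x\<in>S. f x = t}" by (auto simp: spM1)
    also have "{x\<in>S. f x = t} \<in> sets M1" using fm[THEN measurable_sets, of "{t}"]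
      by (simp add: spM1 vimage_def Int_def conj_commute)
    then have "{x\<in>S. f x = t} \<in> L"
      using SL by (auto simp: M1_def sets_restrict_space_iff spM0 sM0)
    then have "emeasure M1 {x\<in>S. f x = t} = codim1_H \<mu> {x\<in>S. f x = t}" by (intro eM1) auto
    finally show ?thesis by simp
  qed
  moreover have "emeasure D {t} \<noteq> 0 \<Longrightarrow> measure D {t} \<noteq> 0" for t
    using \<open>finite_measure D\<close> by (simp add: finite_measure.emeasure_eq_measure)
  ultimately have "{t. codim1_H \<mu> {x\<in>S. f x = t} \<noteq> 0} \<subseteq> {t. measure D {t} \<noteq> 0}" by auto
  then show ?thesis using cnt by (rule countable_subset)
qed


lemma level_pointwise:
  fixes v t w :: real
  assumes "v \<noteq> t"
  shows "\<bar>(if t < w then 1 else 0) - (if t < v then 1 else 0)\<bar> \<le> (1 / \<bar>v - t\<bar>) * \<bar>w - v\<bar>"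
proof -
  have pos: "0 < \<bar>v - t\<bar>" using assms by simp
  consider "t < v" "t < w" | "t < v" "\<not> t < w" | "\<not> t < v" "t < w" | "\<not> t < v" "\<not> t < w" by blast
  then show ?thesis
  proof cases
    case 2
    then have "\<bar>v - t\<bar> \<le> \<bar>w - v\<bar>" by simp
    then show ?thesis using pos by (simp add: 2 field_simps)
  next
    case 3
    then have "\<bar>v - t\<bar> \<le> \<bar>w - v\<bar>" by simp
    then show ?thesis using pos by (simp add: 3 field_simps)
  qed auto
qed

lemma trace_level:
  fixes \<mu> :: "'a::metric_space measure" and u :: "'a \<Rightarrow> real"
  assumes sets_mu: "sets \<mu> = sets borel" and "open \<Omega>"
    and u: "set_integrable \<mu> \<Omega> u" and tr: "has_trace \<mu> \<Omega> u x v" and vt: "v \<noteq> t"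
  shows "has_trace \<mu> \<Omega> (indicator {y. u y > t}) x (if t < v then 1 else 0)"
proof -
  define K where "K = 1 / \<bar>v - t\<bar>"
  have K: "0 \<le> K" by (simp add: K_def)
  have um: "(\<lambda>y. indicator \<Omega> y *\<^sub>R u y) \<in> borel_measurable \<mu>"
    using u unfolding set_integrable_def by (rule borel_measurable_integrable)
  have opn: "ball x r \<inter> \<Omega> \<in> sets \<mu>" for r
    using \<open>open \<Omega>\<close> by (simp add: sets_mu)
  define g where "g r y = ennreal \<bar>u y - v\<bar> * indicator (ball x r \<inter> \<Omega>) y" for r y
  have gm: "g r \<in> borel_measurable \<mu>" for r
  proof -
    have "g r = (\<lambda>y. ennreal \<bar>indicator \<Omega> y *\<^sub>R u y - v\<bar> * indicator (ball x r \<inter> \<Omega>) y)"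
      by (auto simp: g_def fun_eq_iff indicator_def)
    also have "\<dots> \<in> borel_measurable \<mu>"
      using um opn[of r] by measurable
    finally show ?thesis .
  qed
  have bound: "(\<integral>\<^sup>+ y\<in>ball x r \<inter> \<Omega>. ennreal \<bar>indicator {y. u y > t} y - (if t < v then 1 else 0)\<bar> \<partial>\<mu>)
      / emeasure \<mu> (ball x r \<inter> \<Omega>)
     \<le> ennreal K * ((\<integral>\<^sup>+ y\<in>ball x r \<inter> \<Omega>. ennreal \<bar>u y - v\<bar> \<partial>\<mu>) / emeasure \<mu> (ball x r \<inter> \<Omega>))" for r
  proof -
    have "(\<integral>\<^sup>+ y\<in>ball x r \<inter> \<Omega>. ennreal \<bar>indicator {y. u y > t} y - (if t < v then 1 else 0)\<bar> \<partial>\<mu>)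
        \<le> (\<integral>\<^sup>+ y. ennreal K * g r y \<partial>\<mu>)"
    proof (rule nn_integral_mono)
      fix y
      have "\<bar>indicator {y. u y > t} y - (if t < v then 1 else 0)\<bar> \<le> K * \<bar>u y - v\<bar>"
      proof -
        have "indicator {y. u y > t} y = (if t < u y then 1 else 0 :: real)" by simp
        then show ?thesis using level_pointwise[OF vt, of "u y"] by (simp add: K_def)
      qed
      then have "ennreal \<bar>indicator {y. u y > t} y - (if t < v then 1 else 0)\<bar> \<le> ennreal K * ennreal \<bar>u y - v\<bar>"
        using K by (simp add: ennreal_mult[symmetric] ennreal_leI)
      then show "ennreal \<bar>indicator {y. u y > t} y - (if t < v then 1 else 0 :: real)\<bar> * indicator (ball x r \<inter> \<Omega>) y
          \<le> ennreal K * g r y"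
        by (auto simp: g_def indicator_def)
    qed
    also have "\<dots> = ennreal K * (\<integral>\<^sup>+ y. g r y \<partial>\<mu>)" by (rule nn_integral_cmult[OF gm])
    finally have "(\<integral>\<^sup>+ y\<in>ball x r \<inter> \<Omega>. ennreal \<bar>indicator {y. u y > t} y - (if t < v then 1 else 0)\<bar> \<partial>\<mu>)
        / emeasure \<mu> (ball x r \<inter> \<Omega>) \<le> ennreal K * (\<integral>\<^sup>+ y. g r y \<partial>\<mu>) / emeasure \<mu> (ball x r \<inter> \<Omega>)"
      by (rule divide_right_mono_ennreal)
    also have "\<dots> = ennreal K * ((\<integral>\<^sup>+ y. g r y \<partial>\<mu>) / emeasure \<mu> (ball x r \<inter> \<Omega>))"
      by (simp add: ennreal_times_divide)
    finally show ?thesis by (simp add: g_def)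
  qed
  have "((\<lambda>r. ennreal K * ((\<integral>\<^sup>+ y\<in>ball x r \<inter> \<Omega>. ennreal \<bar>u y - v\<bar> \<partial>\<mu>) / emeasure \<mu> (ball x r \<inter> \<Omega>))) \<longlongrightarrow> ennreal K * 0) (at_right 0)"
    using tr unfolding has_trace_def by (intro ennreal_tendsto_cmult) auto
  then have lim: "((\<lambda>r. ennreal K * ((\<integral>\<^sup>+ y\<in>ball x r \<inter> \<Omega>. ennreal \<bar>u y - v\<bar> \<partial>\<mu>) / emeasure \<mu> (ball x r \<inter> \<Omega>))) \<longlongrightarrow> 0) (at_right 0)"
    by simp
  show ?thesis unfolding has_trace_def
    by (rule tendsto_sandwich[OF _ _ tendsto_const lim]; intro always_eventually allI bound zero_le)
qed


theorem mainTheorem8: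
  fixes \<mu> :: "'a::complete_space measure"
    and \<Omega> :: "'a set"
    and f u :: "'a \<Rightarrow> real"
  assumes sets_mu: "sets \<mu> = sets borel"
    and doubling: "doubling_measure \<mu>"
    and PI: "poincare_11 \<mu>"
    and dom_open: "open \<Omega>" and dom_conn: "connected \<Omega>" and dom_ne: "\<Omega> \<noteq> {}"
    and dom_bdd: "bounded \<Omega>"
    and compl_pos: "emeasure \<mu> (UNIV - \<Omega>) > 0"
    and H_bdry_fin: "codim1_H \<mu> (frontier \<Omega>) < \<infinity>"
    and H_bdry_doubling: "boundary_doubling \<mu> \<Omega>"
    and H_bdry_ahlfors: "lower_codim1_ahlfors \<mu> \<Omega>"
    and f_L1: "integrable (codim1_H_on \<mu> (frontier \<Omega>)) f"
    and u_L1: "set_integrable \<mu> \<Omega> u"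
    and trace_u: "H_ae_on \<mu> (frontier \<Omega>) (\<lambda>x. has_trace \<mu> \<Omega> u x (f x))"
  shows "AE t in lborel. H_ae_on \<mu> (frontier \<Omega>)
           (\<lambda>x. has_trace \<mu> \<Omega> (indicator {y. u y > t}) x (indicator {y. f y > t} x))"
proof -
  define S where "S = frontier \<Omega>"
  have S: "closed S" by (simp add: S_def)
  have "sets (codim1_H_on \<mu> S) = sets (restrict_space borel S)"
  proof -
    have sub: "sets (restrict_space borel S) \<subseteq> Pow S"
      using sets.sets_into_space[of _ "restrict_space borel S"] by (auto simp: space_restrict_space)
    have "sigma_sets S (sets (restrict_space borel S)) = sets (restrict_space borel S)"
      using sets.sigma_algebra_axioms[of "restrict_space borel S"]
      by (simp add: sigma_algebra.sigma_sets_eq space_restrict_space)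
    then show ?thesis unfolding codim1_H_on_def using sub by (simp add: sets_measure_of)
  qed
  moreover have "f \<in> borel_measurable (codim1_H_on \<mu> S)"
    using f_L1 by (simp add: S_def borel_measurable_integrable)
  ultimately have fm: "f \<in> borel_measurable (restrict_space borel S)"
    using measurable_cong_sets[of "codim1_H_on \<mu> S" "restrict_space borel S" borel borel] by simp
  define C where "C = {t. codim1_H \<mu> {x\<in>S. f x = t} \<noteq> 0}"
  have "countable C" unfolding C_def
    by (rule countable_levels[OF S _ fm]) (use H_bdry_fin S_def in simp)
  then have Cnull: "C \<in> null_sets lborel" by (rule countable_imp_null_set_lborel)
  obtain N where N0: "codim1_H \<mu> N = 0" and N: "\<And>x. x \<in> S - N \<Longrightarrow> has_trace \<mu> \<Omega> u x (f x)"
    using trace_u unfolding H_ae_on_def S_def by blast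
  have "H_ae_on \<mu> S (\<lambda>x. has_trace \<mu> \<Omega> (indicator {y. u y > t}) x (indicator {y. f y > t} x))"
    if "t \<notin> C" for t
  proof -
    define N' where "N' = N \<union> {x\<in>S. f x = t}"
    have "codim1_H \<mu> N' \<le> codim1_H \<mu> N + codim1_H \<mu> {x\<in>S. f x = t}"
      unfolding N'_def by (rule H_sub2)
    also have "\<dots> = 0" using N0 that by (simp add: C_def)
    finally have "codim1_H \<mu> N' = 0" by simp
    moreover have "has_trace \<mu> \<Omega> (indicator {y. u y > t}) x (indicator {y. f y > t} x)"
      if "x \<in> S - N'" for x
    proof -
      have "x \<in> S - N" "f x \<noteq> t" using that by (auto simp: N'_def)
      from trace_level[OF sets_mu dom_open u_L1 N[OF this(1)] this(2)]
      show ?thesis by (cases "t < f x") (simp_all add: indicator_def)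
    qed
    ultimately show ?thesis unfolding H_ae_on_def by blast
  qed
  then show ?thesis unfolding S_def[symmetric]
    by (intro AE_I'[OF Cnull]) auto
qed

end
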